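(* Let $p$ be a prime, $n\ge1$, $d\ge2$, $I\subseteq\{0,\dots,n\}$, and let ${\bf a}_1,\dots,{\bf a}_N\in\mathbb{N}^{n+1}$ have coordinate sums $d$. Suppose $N\geq\mu_I+|U^I_{\min}|$ and that for each $u\in U^I_{\min}$ there exists $k_u$ with $1\le k_u\le|U^I_{\min}|$ such that $u={\bf a}^+_{\mu_I+k_u}+\sum_{j=1}^{\mu_I}{\bf a}_j^+$. Then the matrix $\bar A^I(\Lambda)$ is invertible (as a matrix over $\mathbb{F}_p(\Lambda_1,\dots,\Lambda_N)$, i.e. $\det\bar A^I(\Lambda)$ is a nonzero polynomial).
   Context: ${\bf a}_j^+=({\bf a}_j,1)\in\mathbb{N}^{n+2}$. The integer $\mu_I$ is defined by $\lceil |I|/d\rceil=\mu_I+1$. $U^I$ is the set of $u=(u_0,\dots,u_{n+1})\in\mathbb{N}^{n+2}$ with $\sum_{i=0}^nu_i=du_{n+1}$ and $u_i>0$ for all $i\in I$; $U^I_{\min}=\{u\in U^I: u_{n+1}=\mu_I+1\}$. The matrix $A^I(\Lambda)=[A^I_{uv}(\Lambda)]_{u,v\in U^I_{\min}}$ has entries $$A^I_{uv}(\Lambda)=(-1)^{\mu_I+1}\sum_{\nu\in\mathbb{N}^N,\ \sum_j\nu_j{\bf a}_j^+=pu-v}\frac{\Lambda_1^{\nu_1}\cdots\Lambda_N^{\nu_N}}{\nu_1!\cdots\nu_N!},$$ which lie in $(\mathbb{Q}\cap\mathbb{Z}_p)[\Lambda]$, and $\bar A^I(\Lambda)$ is its reduction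 modulo $p$. *)

theory Defs
  imports "HOL-Library.Poly_Mapping" "HOL-Combinatorics.Permutations"
    "Berlekamp_Zassenhaus.Finite_Field"
begin

text \<open>Vectors in N^(n+2) are functions nat => nat vanishing above n+1.
  The vectors a_1..a_N in N^(n+1) are given by a :: nat => nat => nat,
  a j i being the i-th coordinate (0 <= i <= n) of a_j.\<close>

definition aplus :: "(nat \<Rightarrow> nat \<Rightarrow> nat) \<Rightarrow> nat \<Rightarrow> nat \<Rightarrow> nat \<Rightarrow> nat" where
  "aplus a n j = (\<lambda>i. if i \<le> n then a j i else if i = n + 1 then 1 else 0)"

definition muI :: "nat set \<Rightarrow> nat \<Rightarrow> int" where
  "muI I d = \<lceil>(of_nat (card I) :: rat) / of_nat d\<rceil> - 1"

definition UI :: "nat \<Rightarrow> nat \<Rightarrow> nat set \<Rightarrow> (nat \<Rightarrow> nat) set" where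
  "UI n d I = {u. (\<forall>i > n + 1. u i = 0) \<and> (\<Sum>i\<le>n. u i) = d * u (n + 1)
                  \<and> (\<forall>i\<in>I. u i > 0)}"

definition UImin :: "nat \<Rightarrow> nat \<Rightarrow> nat set \<Rightarrow> (nat \<Rightarrow> nat) set" where
  "UImin n d I = {u \<in> UI n d I. int (u (n + 1)) = muI I d + 1}"

text \<open>Polynomials in Lambda_1..Lambda_N: exponent vectors nu are (nat =>0 nat),
  lookup nu j = nu_j.\<close>
definition AI :: "nat \<Rightarrow> nat \<Rightarrow> nat \<Rightarrow> nat \<Rightarrow> nat set \<Rightarrow> (nat \<Rightarrow> nat \<Rightarrow> nat)
    \<Rightarrow> (nat \<Rightarrow> nat) \<Rightarrow> (nat \<Rightarrow> nat) \<Rightarrow> ((nat \<Rightarrow>\<^sub>0 nat) \<Rightarrow>\<^sub>0 rat)" where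
  "AI p n d N I a u v =
     (\<Sum>\<nu>\<in>{\<nu>. Poly_Mapping.keys \<nu> \<subseteq> {1..N} \<and>
            (\<forall>i. (\<Sum>j\<in>{1..N}. Poly_Mapping.lookup \<nu> j * aplus a n j i) + v i = p * u i)}.
        Poly_Mapping.single \<nu>
          ((-1) ^ nat (muI I d + 1) / (\<Prod>j\<in>{1..N}. fact (Poly_Mapping.lookup \<nu> j))))"

text \<open>Reduction modulo p of a rational number (meaningful for p-integral rationals).\<close>
definition red_mod :: "rat \<Rightarrow> 'p::prime_card mod_ring" where
  "red_mod r = of_int (fst (quotient_of r)) / of_int (snd (quotient_of r))"

definition AIbar :: "nat \<Rightarrow> nat \<Rightarrow> nat \<Rightarrow> nat set \<Rightarrow> (nat \<Rightarrow> nat \<Rightarrow> nat)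
    \<Rightarrow> (nat \<Rightarrow> nat) \<Rightarrow> (nat \<Rightarrow> nat) \<Rightarrow> ((nat \<Rightarrow>\<^sub>0 nat) \<Rightarrow>\<^sub>0 'p::prime_card mod_ring)" where
  "AIbar n d N I a u v = Poly_Mapping.map red_mod (AI CARD('p) n d N I a u v)"

definition det_on :: "'i set \<Rightarrow> ('i \<Rightarrow> 'i \<Rightarrow> 'r::comm_ring_1) \<Rightarrow> 'r" where
  "det_on S M = (\<Sum>\<sigma>\<in>{\<sigma>. \<sigma> permutes S}. of_int (sign \<sigma>) * (\<Prod>u\<in>S. M u (\<sigma> u)))"

end

theory Submission
  imports Defs
begin

lemma prod_single:
  fixes g :: "'a \<Rightarrow> 'k::comm_monoid_add" and h :: "'a \<Rightarrow> 'r::comm_semiring_1"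
  assumes "finite A"
  shows "(\<Prod>x\<in>A. Poly_Mapping.single (g x) (h x)) = Poly_Mapping.single (\<Sum>x\<in>A. g x) (\<Prod>x\<in>A. h x)"
  using assms by (induction A rule: finite_induct) (simp_all add: mult_single)

lemma ofint_single:
  fixes y :: "'r::comm_ring_1" and x :: "'k::comm_monoid_add"
  shows "(of_int z :: 'k \<Rightarrow>\<^sub>0 'r) * Poly_Mapping.single x y = Poly_Mapping.single x (of_int z * y)"
  by (metis single_of_int mult_single add_0)

lemma det_lookup:
  fixes M :: "'i \<Rightarrow> 'i \<Rightarrow> ('k::comm_monoid_add \<Rightarrow>\<^sub>0 'r::comm_ring_1)"
  assumes fin: "finite U" and finS: "\<And>u v. finite (S u v)"
    and M: "\<And>u v. u \<in> U \<Longrightarrow> v \<in> U \<Longrightarrow> M u v = (\<Sum>\<nu>\<in>S u v. Poly_Mapping.single \<nu> (c \<nu>))"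
  shows "Poly_Mapping.lookup (det_on U M) m0 =
    (\<Sum>\<sigma>\<in>{\<sigma>. \<sigma> permutes U}. \<Sum>f\<in>PiE U (\<lambda>u. S u (\<sigma> u)).
        if (\<Sum>u\<in>U. f u) = m0 then of_int (sign \<sigma>) * (\<Prod>u\<in>U. c (f u)) else 0)"
proof -
  have "\<And>\<sigma>. \<sigma> permutes U \<Longrightarrow> (of_int (sign \<sigma>) * (\<Prod>u\<in>U. M u (\<sigma> u)) :: 'k \<Rightarrow>\<^sub>0 'r) =
     (\<Sum>f\<in>PiE U (\<lambda>u. S u (\<sigma> u)). Poly_Mapping.single (\<Sum>u\<in>U. f u) (of_int (sign \<sigma>) * (\<Prod>u\<in>U. c (f u))))"
  proof -
    fix \<sigma> assume s: "\<sigma> permutes U"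
    have "(\<Prod>u\<in>U. M u (\<sigma> u)) = (\<Prod>u\<in>U. \<Sum>\<nu>\<in>S u (\<sigma> u). Poly_Mapping.single \<nu> (c \<nu>))"
      using M permutes_in_image[OF s] by (intro prod.cong) auto
    also have "\<dots> = (\<Sum>f\<in>PiE U (\<lambda>u. S u (\<sigma> u)). \<Prod>u\<in>U. Poly_Mapping.single (f u) (c (f u)))"
      by (rule prod_sum_PiE) (use fin finS in auto)
    also have "\<dots> = (\<Sum>f\<in>PiE U (\<lambda>u. S u (\<sigma> u)). Poly_Mapping.single (\<Sum>u\<in>U. f u) (\<Prod>u\<in>U. c (f u)))"
      using fin by (simp add: prod_single)
    finally show "?thesis \<sigma>" by (simp add: sum_distrib_left ofint_single)
  qed
  then show ?thesis
    unfolding det_on_def lookup_sum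
    by (intro sum.cong) (auto simp: lookup_sum lookup_single when_def)
qed

lemma ofint_zero_iff: "(of_int x :: 'a::prime_card mod_ring) = 0 \<longleftrightarrow> int CARD('a) dvd x"
  unfolding of_int_of_int_mod_ring by transfer (auto simp: dvd_eq_mod_eq_0)

lemma red_mod_unit:
  fixes s P :: int
  assumes P: "P > 0" and s: "s = 1 \<or> s = -1"
  shows "(red_mod (of_int s / of_int P) :: 'a::prime_card mod_ring) = of_int s / of_int P"
proof -
  obtain a b where q: "quotient_of (of_int s / of_int P) = (a, b)" by (cases "quotient_of (of_int s / of_int P)")
  have r: "(of_int s / of_int P :: rat) = of_int a / of_int b" using quotient_of_div[OF q] .
  have b: "b > 0" using quotient_of_denom_pos[OF q] .
  have cop: "coprime a b" using quotient_of_coprime[OF q] .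
  have "(of_int (a * P) :: rat) = of_int (s * b)"
    using r P b by (simp add: field_simps)
  hence e: "a * P = s * b" by linarith
  hence e2: "a * s * P = b" using s by auto
  hence "a dvd b" by (metis dvd_triv_left mult.assoc)
  hence "is_unit a" using cop by (meson coprime_common_divisor dvd_refl)
  hence "a = 1 \<or> a = -1" by (simp add: abs_if split: if_splits)
  moreover have as: "0 < a * s" using e2 b P zero_less_mult_pos2[of "a * s" P] by (simp add: mult.commute)
  ultimately have "a = s" using s by auto
  hence "a = s \<and> b = P" using e2 s by auto
  thus ?thesis unfolding red_mod_def q by simp
qed

lemma digits_bound:
  fixes x :: "nat \<Rightarrow> nat"
  assumes "\<forall>i<L. x i < D"
  shows "(\<Sum>i<L. x i * D ^ i) < D ^ L"
  using assms
proof (induction L)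
  case 0 then show ?case by simp
next
  case (Suc L)
  have "(\<Sum>i<Suc L. x i * D ^ i) = (\<Sum>i<L. x i * D ^ i) + x L * D ^ L" by simp
  also have "\<dots> < D ^ L + x L * D ^ L" using Suc by simp
  also have "\<dots> \<le> D ^ L + (D - 1) * D ^ L" using Suc.prems by (intro add_left_mono mult_right_mono) auto
  also have "\<dots> = D ^ Suc L" using Suc.prems
    by (cases D) (auto simp: algebra_simps)
  finally show ?case .
qed

lemma digits_inj:
  fixes x y :: "nat \<Rightarrow> nat"
  assumes "\<forall>i<L. x i < D" "\<forall>i<L. y i < D" "(\<Sum>i<L. x i * D ^ i) = (\<Sum>i<L. y i * D ^ i)"
  shows "\<forall>i<L. x i = y i"
  using assms
proof (induction L)
  case 0 then show ?case by simp
next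
  case (Suc L)
  have bx: "(\<Sum>i<L. x i * D ^ i) < D ^ L" using Suc.prems by (intro digits_bound) auto
  have by': "(\<Sum>i<L. y i * D ^ i) < D ^ L" using Suc.prems by (intro digits_bound) auto
  have eq: "(\<Sum>i<L. x i * D ^ i) + x L * D ^ L = (\<Sum>i<L. y i * D ^ i) + y L * D ^ L"
    using Suc.prems(3) by simp
  have pos: "D ^ L \<noteq> 0" using bx by (metis not_less0)
  have "x L = ((\<Sum>i<L. x i * D ^ i) + x L * D ^ L) div D ^ L" using bx pos by (simp add: div_mult_self1)
  also have "\<dots> = y L" using eq by' pos by (simp add: div_mult_self1)
  finally have xl: "x L = y L" .
  hence "(\<Sum>i<L. x i * D ^ i) = (\<Sum>i<L. y i * D ^ i)" using eq by simp
  hence "\<forall>i<L. x i = y i" by (intro Suc.IH) (use Suc.prems in auto)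
  with xl show ?case by (auto simp: less_Suc_eq)
qed

definition Sset :: "nat \<Rightarrow> nat \<Rightarrow> nat \<Rightarrow> (nat \<Rightarrow> nat \<Rightarrow> nat) \<Rightarrow> (nat \<Rightarrow> nat) \<Rightarrow> (nat \<Rightarrow> nat) \<Rightarrow> (nat \<Rightarrow>\<^sub>0 nat) set" where
  "Sset p n N a u v = {\<nu>. Poly_Mapping.keys \<nu> \<subseteq> {1..N} \<and>
            (\<forall>i. (\<Sum>j\<in>{1..N}. Poly_Mapping.lookup \<nu> j * aplus a n j i) + v i = p * u i)}"

definition cf :: "nat set \<Rightarrow> nat \<Rightarrow> nat \<Rightarrow> (nat \<Rightarrow>\<^sub>0 nat) \<Rightarrow> rat" where
  "cf I d N \<nu> = (-1) ^ nat (muI I d + 1) / (\<Prod>j\<in>{1..N}. fact (Poly_Mapping.lookup \<nu> j))"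

lemma AI_eq: "AI p n d N I a u v = (\<Sum>\<nu>\<in>Sset p n N a u v. Poly_Mapping.single \<nu> (cf I d N \<nu>))"
  by (simp add: AI_def Sset_def cf_def)

lemma aplus_last [simp]: "aplus a n j (n + 1) = 1"
  by (simp add: aplus_def)

lemma aplus_Suc [simp]: "aplus a n j (Suc n) = 1"
  by (simp add: aplus_def)

lemma Sset_finite: "finite (Sset p n N a u v)"
proof -
  let ?C = "p * u (n + 1)"
  let ?S = "Sset p n N a u v"
  have bnd: "Poly_Mapping.lookup \<nu> j \<le> ?C" if "\<nu> \<in> ?S" "j \<in> {1..N}" for \<nu> j
  proof -
    have "(\<Sum>j\<in>{1..N}. Poly_Mapping.lookup \<nu> j) + v (n + 1) = ?C"
      using that(1) unfolding Sset_def by (auto dest: spec[of _ "n + 1"] simp: aplus_def)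
    moreover have "Poly_Mapping.lookup \<nu> j \<le> (\<Sum>j\<in>{1..N}. Poly_Mapping.lookup \<nu> j)"
      using that(2) by (intro member_le_sum) auto
    ultimately show ?thesis by linarith
  qed
  have out: "Poly_Mapping.lookup \<nu> j = 0" if "\<nu> \<in> ?S" "j \<notin> {1..N}" for \<nu> j
    using that unfolding Sset_def by (auto simp: in_keys_iff)
  have "inj_on (\<lambda>\<nu>. restrict (Poly_Mapping.lookup \<nu>) {1..N}) ?S"
  proof (rule inj_onI)
    fix x y assume xy: "x \<in> ?S" "y \<in> ?S" "restrict (Poly_Mapping.lookup x) {1..N} = restrict (Poly_Mapping.lookup y) {1..N}"
    show "x = y"
    proof (rule poly_mapping_eqI)
      fix j show "Poly_Mapping.lookup x j = Poly_Mapping.lookup y j"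
        using xy out[of x j] out[of y j] by (cases "j \<in> {1..N}") (auto dest: fun_cong[of _ _ j])
    qed
  qed
  moreover have "(\<lambda>\<nu>. restrict (Poly_Mapping.lookup \<nu>) {1..N}) ` ?S \<subseteq> PiE {1..N} (\<lambda>_. {..?C})"
    using bnd by auto
  moreover have "finite (PiE {1..N} (\<lambda>_. {..?C}))" by (intro finite_PiE) auto
  ultimately show ?thesis by (meson finite_imageD finite_subset)
qed

lemma red_mod_zero [simp]: "red_mod 0 = 0"
  by (simp add: red_mod_def)

lemma AIbar_eq: "(AIbar n d N I a u v :: _ \<Rightarrow>\<^sub>0 'p::prime_card mod_ring)
   = (\<Sum>\<nu>\<in>Sset CARD('p) n N a u v. Poly_Mapping.single \<nu> (red_mod (cf I d N \<nu>)))"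
proof (rule poly_mapping_eqI)
  fix k
  have l: "Poly_Mapping.lookup (AI CARD('p) n d N I a u v) k = (if k \<in> Sset CARD('p) n N a u v then cf I d N k else 0)"
    unfolding AI_eq lookup_sum by (simp add: lookup_single when_def Sset_finite)
  show "Poly_Mapping.lookup (AIbar n d N I a u v :: _ \<Rightarrow>\<^sub>0 'p::prime_card mod_ring) k =
     Poly_Mapping.lookup (\<Sum>\<nu>\<in>Sset CARD('p) n N a u v. Poly_Mapping.single \<nu> (red_mod (cf I d N \<nu>))) k"
    unfolding AIbar_def lookup_sum using l
    by (simp add: map.rep_eq lookup_single when_def Sset_finite)
qed

lemma red_cf:
  "(red_mod (cf I d N \<nu>) :: 'a::prime_card mod_ring) =
     of_int ((-1) ^ nat (muI I d + 1)) / of_nat (\<Prod>j\<in>{1..N}. fact (Poly_Mapping.lookup \<nu> j))"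
proof -
  let ?P = "int (\<Prod>j\<in>{1..N}. fact (Poly_Mapping.lookup \<nu> j) :: nat)"
  have P: "?P > 0" by (simp add: prod_pos)
  have c: "cf I d N \<nu> = of_int ((-1) ^ nat (muI I d + 1)) / of_int ?P"
    unfolding cf_def by (simp add: of_nat_prod)
  have "((-1::int) ^ nat (muI I d + 1)) = 1 \<or> ((-1::int) ^ nat (muI I d + 1)) = -1"
    by (simp add: minus_one_power_iff)
  from red_mod_unit[OF P this, where 'a='a]
  have "(red_mod (cf I d N \<nu>) :: 'a::prime_card mod_ring) = of_int ((-1) ^ nat (muI I d + 1)) / of_int ?P"
    unfolding c .
  then show ?thesis by (simp only: of_int_of_nat_eq)
qed

lemma red_cf_zero_iff:
  "(red_mod (cf I d N \<nu>) :: 'a::prime_card mod_ring) \<noteq> 0 \<longleftrightarrow>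
     (\<forall>j\<in>{1..N}. Poly_Mapping.lookup \<nu> j < CARD('a))"
proof -
  have pr: "prime CARD('a)" by (rule prime_card)
  have s: "(of_int ((-1) ^ nat (muI I d + 1)) :: 'a mod_ring) \<noteq> 0"
    by (simp add: minus_one_power_iff)
  have "(of_nat (\<Prod>j\<in>{1..N}. fact (Poly_Mapping.lookup \<nu> j)) :: 'a mod_ring) = 0 \<longleftrightarrow>
        CARD('a) dvd (\<Prod>j\<in>{1..N}. fact (Poly_Mapping.lookup \<nu> j))"
    using ofint_zero_iff[where 'a='a, of "int (\<Prod>j\<in>{1..N}. fact (Poly_Mapping.lookup \<nu> j))"]
    by (simp only: of_int_of_nat_eq int_dvd_int_iff)
  also have "\<dots> \<longleftrightarrow> (\<exists>j\<in>{1..N}. CARD('a) \<le> Poly_Mapping.lookup \<nu> j)"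
    using pr by (simp add: prime_dvd_prod_iff prime_dvd_fact_iff)
  finally show ?thesis unfolding red_cf using s by (auto simp: not_le)
qed

lemma eq_bound:
  fixes g :: "'a \<Rightarrow> nat"
  assumes "finite U" "\<forall>u\<in>U. g u \<le> c" "(\<Sum>u\<in>U. g u) = card U * c"
  shows "\<forall>u\<in>U. g u = c"
proof (rule ccontr)
  assume "\<not> ?thesis"
  then obtain u where "u \<in> U" "g u < c" using assms(2) by force
  hence "(\<Sum>u\<in>U. g u) < (\<Sum>u\<in>U. c)"
    using assms(1,2) by (intro sum_strict_mono_ex1) auto
  thus False using assms(3) by simp
qed

lemma sum_single_nz:
  assumes "finite A" "x \<in> A" "\<forall>y\<in>A. y \<noteq> x \<longrightarrow> g y = 0"
  shows "sum g A = g x"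
proof -
  have "sum g A = g x + sum g (A - {x})" using assms by (simp add: sum.remove)
  also have "sum g (A - {x}) = 0" using assms by (intro sum.neutral) auto
  finally show ?thesis by simp
qed

lemma peel:
  fixes U :: "'u set" and \<sigma> :: "'u \<Rightarrow> 'u" and \<nu> :: "'u \<Rightarrow> 'u \<Rightarrow> nat" and \<beta> :: "'u \<Rightarrow> nat"
  assumes fin: "finite U" and perm: "\<sigma> permutes U" and inj: "inj_on \<beta> U"
    and row: "\<forall>u\<in>U. (\<Sum>v\<in>U. \<nu> u v * \<beta> v) + \<beta> (\<sigma> u) = p * \<beta> u"
    and rowsum: "\<forall>u\<in>U. (\<Sum>v\<in>U. \<nu> u v) + 1 = p"
    and colsum: "\<forall>v\<in>U. (\<Sum>u\<in>U. \<nu> u v) = p - 1"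
  shows "\<forall>u\<in>U. \<sigma> u = u \<and> (\<forall>v\<in>U. \<nu> u v = (if v = u then p - 1 else 0))"
proof
  fix u assume "u \<in> U"
  define Mx where "Mx = Max (\<beta> ` U)"
  have leM: "\<beta> w \<le> Mx" if "w \<in> U" for w using fin that unfolding Mx_def by auto
  show "\<sigma> u = u \<and> (\<forall>v\<in>U. \<nu> u v = (if v = u then p - 1 else 0))"
    using \<open>u \<in> U\<close>
  proof (induction "Mx - \<beta> u" arbitrary: u rule: less_induct)
    case less
    note uU = less.prems
    have big: "\<sigma> w = w \<and> (\<forall>v\<in>U. \<nu> w v = (if v = w then p - 1 else 0))" if "w \<in> U" "\<beta> w > \<beta> u" for w
      using less.hyps[of w] that leM[of w] by auto
    have h1: "\<nu> u v = 0" if "v \<in> U" "\<beta> v > \<beta> u" for v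
    proof -
      have vv: "\<nu> v v = p - 1" using big[OF that] that(1) by auto
      have uv: "u \<noteq> v" using that by auto
      have "(\<Sum>w\<in>{u, v}. \<nu> w v) \<le> (\<Sum>w\<in>U. \<nu> w v)"
        using fin uU that(1) by (intro sum_mono2) auto
      hence "\<nu> u v + \<nu> v v \<le> p - 1" using uv colsum that(1) by simp
      thus ?thesis using vv by simp
    qed
    have h2: "\<beta> (\<sigma> u) \<le> \<beta> u"
    proof (rule ccontr)
      assume gt: "\<not> \<beta> (\<sigma> u) \<le> \<beta> u"
      hence "\<sigma> (\<sigma> u) = \<sigma> u" using big[of "\<sigma> u"] permutes_in_image[OF perm] uU by auto
      hence "\<sigma> u = u" using permutes_inj[OF perm] by (auto dest: injD)
      thus False using gt by simp
    qed
    have h3: "\<nu> u v * \<beta> v \<le> \<nu> u v * \<beta> u" if "v \<in> U" for v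
      using h1[OF that] by (cases "\<beta> v > \<beta> u") auto
    have rs: "(\<Sum>v\<in>U. \<nu> u v) = p - 1" and p1: "p \<ge> 1" using rowsum uU by auto
    have s1: "(\<Sum>v\<in>U. \<nu> u v * \<beta> v) \<le> (\<Sum>v\<in>U. \<nu> u v * \<beta> u)"
      using h3 by (intro sum_mono) auto
    have s2: "(\<Sum>v\<in>U. \<nu> u v * \<beta> u) = (p - 1) * \<beta> u"
      using rs by (simp only: sum_distrib_right[symmetric])
    have pe: "p * \<beta> u = (p - 1) * \<beta> u + \<beta> u" using p1
      by (metis One_nat_def Suc_diff_le diff_Suc_1 mult_Suc le_add_diff_inverse add.commute)
    have r: "(\<Sum>v\<in>U. \<nu> u v * \<beta> v) + \<beta> (\<sigma> u) = p * \<beta> u" using row uU by auto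
    have eqb: "\<beta> (\<sigma> u) = \<beta> u" using r s1 s2 pe h2 by linarith
    have su: "\<sigma> u = u" using inj_onD[OF inj eqb] permutes_in_image[OF perm] uU by auto
    have s3: "(\<Sum>v\<in>U. \<nu> u v * \<beta> v) = (\<Sum>v\<in>U. \<nu> u v * \<beta> u)" using r s1 s2 pe eqb by linarith
    have h4: "\<nu> u v = 0" if "v \<in> U" "v \<noteq> u" for v
    proof (rule ccontr)
      assume nz: "\<nu> u v \<noteq> 0"
      have "\<not> \<beta> v > \<beta> u" using h1[OF that(1)] nz by auto
      moreover have "\<beta> v \<noteq> \<beta> u" using inj_onD[OF inj] that uU by auto
      ultimately have "\<beta> v < \<beta> u" by simp
      hence "\<nu> u v * \<beta> v < \<nu> u v * \<beta> u" using nz by simp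
      hence "(\<Sum>v\<in>U. \<nu> u v * \<beta> v) < (\<Sum>v\<in>U. \<nu> u v * \<beta> u)"
        using fin h3 that(1) by (intro sum_strict_mono_ex1) auto
      thus False using s3 by simp
    qed
    have "(\<Sum>v\<in>U. \<nu> u v) = \<nu> u u"
      using fin uU h4 by (intro sum_single_nz) auto
    hence uu: "\<nu> u u = p - 1" using rs by simp
    show ?case using su uu h4 by auto
  qed
qed

theorem theorem7p2:
  fixes n d N :: nat and I :: "nat set" and a :: "nat \<Rightarrow> nat \<Rightarrow> nat"
  assumes "n \<ge> 1" and "d \<ge> 2" and "I \<subseteq> {0..n}"
    and "\<forall>j\<in>{1..N}. (\<Sum>i\<le>n. a j i) = d"
    and "int N \<ge> muI I d + int (card (UImin n d I))"
    and "\<forall>u\<in>UImin n d I. \<exists>k. 1 \<le> k \<and> k \<le> card (UImin n d I) \<and>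
           u = (\<lambda>i. aplus a n (nat (muI I d + int k)) i
                    + (\<Sum>j\<in>{1..nat (muI I d)}. aplus a n j i))"
  shows "det_on (UImin n d I) (AIbar n d N I a :: (nat \<Rightarrow> nat) \<Rightarrow> (nat \<Rightarrow> nat)
            \<Rightarrow> ((nat \<Rightarrow>\<^sub>0 nat) \<Rightarrow>\<^sub>0 'p::prime_card mod_ring)) \<noteq> 0"
proof -
  define p where "p = CARD('p)"
  have pr: "prime p" unfolding p_def by (rule prime_card)
  hence p2: "p \<ge> 2" by (rule prime_ge_2_nat)
  define U where "U = UImin n d I"
  define K where "K = card U"
  define vec where "vec k = (\<lambda>i. aplus a n (nat (muI I d + int k)) i
                    + (\<Sum>j\<in>{1..nat (muI I d)}. aplus a n j i))" for k
  have hyp: "\<forall>u\<in>U. \<exists>k. 1 \<le> k \<and> k \<le> K \<and> u = vec k"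
    using assms(6) unfolding U_def K_def vec_def by blast
  have finU: "finite U"
  proof (rule finite_subset)
    show "U \<subseteq> vec ` {1..K}" using hyp by force
  qed auto
  let ?M = "AIbar n d N I a :: (nat \<Rightarrow> nat) \<Rightarrow> (nat \<Rightarrow> nat) \<Rightarrow> ((nat \<Rightarrow>\<^sub>0 nat) \<Rightarrow>\<^sub>0 'p::prime_card mod_ring)"
  show ?thesis
  proof (cases "U = {}")
    case True
    have "{\<sigma>. \<sigma> permutes ({} :: (nat \<Rightarrow> nat) set)} = {id}" by auto
    hence "det_on U ?M = 1" using True by (simp add: det_on_def)
    thus ?thesis unfolding U_def by simp
  next
    case False
    then obtain u0 where u0: "u0 \<in> U" by auto
    define m where "m = nat (muI I d)"
    define T where "T i = (\<Sum>j\<in>{1..m}. aplus a n j i)" for i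
    have Tl: "T (n + 1) = m" unfolding T_def by simp
    have mu0: "muI I d = int m"
    proof -
      obtain k0 where k0: "u0 = vec k0" using hyp u0 by blast
      have "int (u0 (n + 1)) = muI I d + 1" using u0 unfolding U_def UImin_def by auto
      moreover have "u0 (n + 1) = 1 + m" unfolding k0 vec_def m_def by simp
      ultimately show ?thesis unfolding m_def by linarith
    qed
    have vecE: "vec k = (\<lambda>i. aplus a n (m + k) i + T i)" for k
      unfolding vec_def T_def mu0 by (simp add: nat_int_add m_def[symmetric])
    define kk where "kk u = (SOME k. 1 \<le> k \<and> k \<le> K \<and> u = vec k)" for u
    have kkP: "1 \<le> kk u \<and> kk u \<le> K \<and> u = vec (kk u)" if "u \<in> U" for u
      unfolding kk_def using someI_ex[OF hyp[rule_format, OF that]] .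
    have kinj: "inj_on kk U"
      by (rule inj_onI) (metis kkP)
    define B where "B u = aplus a n (m + kk u)" for u
    have uB: "u i = B u i + T i" if "u \<in> U" for u i
      using kkP[OF that] unfolding B_def vecE by (metis)
    have mKN: "m + K \<le> N" using assms(5) mu0 unfolding U_def K_def by linarith
    have kN: "m + kk u \<in> {1..N}" "m + kk u > m" if "u \<in> U" for u
      using kkP[OF that] mKN by auto
    have abnd: "aplus a n j i \<le> d" if "j \<in> {1..N}" for j i
    proof -
      have "a j i \<le> (\<Sum>i\<le>n. a j i)" if "i \<le> n" using that by (intro member_le_sum) auto
      thus ?thesis using assms(2,4) that unfolding aplus_def by auto
    qed
    define D where "D = d + 1"
    define ell where "ell x = (\<Sum>i<n+2. x i * D ^ i)" for x :: "nat \<Rightarrow> nat"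
    define \<beta> where "\<beta> u = ell (B u)" for u
    have Bout: "B u i = 0" if "i \<ge> n + 2" for u i
      using that unfolding B_def aplus_def by auto
    have binj: "inj_on \<beta> U"
    proof (rule inj_onI)
      fix u v assume uv: "u \<in> U" "v \<in> U" "\<beta> u = \<beta> v"
      have "\<forall>i<n+2. B u i = B v i"
        using uv(3) unfolding \<beta>_def ell_def
        by (intro digits_inj) (use abnd kN uv(1,2) in \<open>auto simp: B_def D_def less_Suc_eq_le\<close>)
      hence "B u i = B v i" for i using Bout[of i u] Bout[of i v] by (cases "i < n + 2") auto
      thus "u = v" using uB uv(1,2) by (intro ext) metis
    qed
    define J where "J u = insert (m + kk u) {1..m}" for u
    define \<nu>s where "\<nu>s u = (\<Sum>j\<in>J u. Poly_Mapping.single j (p - 1))" for u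
    have lk\<nu>s: "Poly_Mapping.lookup (\<nu>s u) j = (if j \<in> J u then p - 1 else 0)" for u j
      unfolding \<nu>s_def lookup_sum by (simp add: lookup_single when_def J_def)
    define m0 where "m0 = (\<Sum>u\<in>U. \<nu>s u)"
    define S where "S u v = Sset p n N a u v" for u v
    define c where "c \<nu> = (red_mod (cf I d N \<nu>) :: 'p mod_ring)" for \<nu>
    have Meq: "?M u v = (\<Sum>\<nu>\<in>S u v. Poly_Mapping.single \<nu> (c \<nu>))" for u v
      unfolding S_def c_def p_def by (rule AIbar_eq)
    have finS: "finite (S u v)" for u v unfolding S_def by (rule Sset_finite)
    have DL: "Poly_Mapping.lookup (det_on U ?M) m0 =
      (\<Sum>\<sigma>\<in>{\<sigma>. \<sigma> permutes U}. \<Sum>f\<in>PiE U (\<lambda>u. S u (\<sigma> u)).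
        if (\<Sum>u\<in>U. f u) = m0 then of_int (sign \<sigma>) * (\<Prod>u\<in>U. c (f u)) else 0)"
      by (rule det_lookup[OF finU finS Meq])
    have cnz: "c \<nu> \<noteq> 0 \<longleftrightarrow> (\<forall>j\<in>{1..N}. Poly_Mapping.lookup \<nu> j < p)" for \<nu>
      unfolding c_def p_def by (rule red_cf_zero_iff)
    have pm: "(p - 1) * x + x = p * x" for x using p2 by (cases p) auto
    have JN: "J u \<subseteq> {1..N}" if "u \<in> U" for u
      using kN[OF that] unfolding J_def by auto
    have \<nu>sS: "\<nu>s u \<in> S u u" if uU: "u \<in> U" for u
    proof -
      have keys: "Poly_Mapping.keys (\<nu>s u) \<subseteq> {1..N}"
        using JN[OF uU] by (auto simp: in_keys_iff lk\<nu>s split: if_splits)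
      have "(\<Sum>j\<in>{1..N}. Poly_Mapping.lookup (\<nu>s u) j * aplus a n j i) + u i = p * u i" for i
      proof -
        have "(\<Sum>j\<in>{1..N}. Poly_Mapping.lookup (\<nu>s u) j * aplus a n j i) =
              (\<Sum>j\<in>J u. Poly_Mapping.lookup (\<nu>s u) j * aplus a n j i)"
          using JN[OF uU] by (intro sum.mono_neutral_right) (auto simp: lk\<nu>s)
        also have "\<dots> = (\<Sum>j\<in>J u. (p - 1) * aplus a n j i)"
          by (intro sum.cong) (auto simp: lk\<nu>s)
        also have "\<dots> = (p - 1) * (B u i + T i)"
          using kN[OF uU] unfolding J_def B_def T_def by (simp add: sum_distrib_left[symmetric] distrib_left)
        also have "\<dots> = (p - 1) * u i" using uB[OF uU] by simp
        finally show ?thesis using pm by simp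
      qed
      thus ?thesis using keys unfolding S_def Sset_def by auto
    qed
    have \<nu>snz: "c (\<nu>s u) \<noteq> 0" for u
      unfolding cnz lk\<nu>s using p2 by auto
    define \<nu>r where "\<nu>r = restrict \<nu>s U"
    have key: "\<sigma> = id \<and> f = \<nu>r" if "\<sigma> permutes U" "f \<in> PiE U (\<lambda>u. S u (\<sigma> u))"
      "(\<Sum>u\<in>U. f u) = m0" "\<forall>u\<in>U. c (f u) \<noteq> 0" for \<sigma> f
    proof -
      note perm = that(1)
      have fS: "f u \<in> S u (\<sigma> u)" if "u \<in> U" for u using that \<open>f \<in> _\<close> by auto
      have keysf: "Poly_Mapping.keys (f u) \<subseteq> {1..N}" if "u \<in> U" for u
        using fS[OF that] unfolding S_def Sset_def by auto
      have lt: "Poly_Mapping.lookup (f u) j < p" if "u \<in> U" for u j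
      proof (cases "j \<in> {1..N}")
        case True thus ?thesis using that \<open>\<forall>u\<in>U. c (f u) \<noteq> 0\<close> cnz by auto
      next
        case False
        hence "Poly_Mapping.lookup (f u) j = 0" using keysf[OF that] by (auto simp: in_keys_iff)
        thus ?thesis using p2 by simp
      qed
      have ssum: "(\<Sum>u\<in>U. Poly_Mapping.lookup (f u) j) = (\<Sum>u\<in>U. Poly_Mapping.lookup (\<nu>s u) j)" for j
        using arg_cong[OF that(3), of "\<lambda>x. Poly_Mapping.lookup x j"] unfolding m0_def lookup_sum .
      have A1: "Poly_Mapping.lookup (f u) j = p - 1" if "u \<in> U" "j \<in> {1..m}" for u j
      proof -
        have "(\<Sum>w\<in>U. Poly_Mapping.lookup (\<nu>s w) j) = (\<Sum>w\<in>U. p - 1)"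
          using that(2) by (intro sum.cong) (auto simp: lk\<nu>s J_def)
        hence s1: "(\<Sum>w\<in>U. Poly_Mapping.lookup (f w) j) = card U * (p - 1)" using ssum by simp
        have s2: "\<forall>w\<in>U. Poly_Mapping.lookup (f w) j \<le> p - 1"
        proof
          fix w assume "w \<in> U"
          hence "Poly_Mapping.lookup (f w) j < p" by (rule lt)
          thus "Poly_Mapping.lookup (f w) j \<le> p - 1" by linarith
        qed
        show ?thesis using eq_bound[OF finU s2 s1] that(1) by auto
      qed
      define img where "img = (\<lambda>v. m + kk v) ` U"
      have A2: "Poly_Mapping.lookup (f u) j = 0" if "u \<in> U" "j \<notin> {1..m}" "j \<notin> img" for u j
      proof -
        have "(\<Sum>w\<in>U. Poly_Mapping.lookup (\<nu>s w) j) = 0"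
          using that(2,3) by (intro sum.neutral) (auto simp: lk\<nu>s J_def img_def)
        hence "(\<Sum>w\<in>U. Poly_Mapping.lookup (f w) j) = 0" using ssum by simp
        thus ?thesis using finU that(1) by simp
      qed
      have kk_eq: "m + kk v = m + kk w \<longleftrightarrow> v = w" if "v \<in> U" "w \<in> U" for v w
        using inj_onD[OF kinj] that by auto
      define \<nu>' where "\<nu>' u v = Poly_Mapping.lookup (f u) (m + kk v)" for u v
      have colsum: "\<forall>v\<in>U. (\<Sum>u\<in>U. \<nu>' u v) = p - 1"
      proof
        fix v assume vU: "v \<in> U"
        have "(\<Sum>w\<in>U. Poly_Mapping.lookup (\<nu>s w) (m + kk v)) = Poly_Mapping.lookup (\<nu>s v) (m + kk v)"
        proof (rule sum_single_nz[OF finU vU], intro ballI impI)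
          fix y assume yU: "y \<in> U" and yv: "y \<noteq> v"
          have "m + kk v \<noteq> m + kk y" using kk_eq[OF vU yU] yv by auto
          moreover have "m + kk v \<notin> {1..m}" using kN[OF vU] by auto
          ultimately show "Poly_Mapping.lookup (\<nu>s y) (m + kk v) = 0" by (auto simp add: lk\<nu>s J_def)
        qed
        also have "\<dots> = p - 1" by (simp add: lk\<nu>s J_def)
        finally show "(\<Sum>u\<in>U. \<nu>' u v) = p - 1" using ssum unfolding \<nu>'_def by simp
      qed
      have injimg: "inj_on (\<lambda>v. m + kk v) U" using kinj by (auto simp: inj_on_def)
      have rowvec: "(\<Sum>v\<in>U. \<nu>' u v * B v i) + B (\<sigma> u) i = p * B u i" if uU: "u \<in> U" for u i
      proof -
        define h where "h j = Poly_Mapping.lookup (f u) j * aplus a n j i" for j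
        have e: "(\<Sum>j\<in>{1..N}. h j) + \<sigma> u i = p * u i"
          using fS[OF uU] unfolding S_def Sset_def h_def by auto
        have sub: "{1..m} \<union> img \<subseteq> {1..N}" using kN mKN unfolding img_def by auto
        have dis: "{1..m} \<inter> img = {}"
        proof -
          have "m + kk v \<notin> {1..m}" if "v \<in> U" for v using kN(2)[OF that] by auto
          thus ?thesis unfolding img_def by blast
        qed
        have "(\<Sum>j\<in>{1..N}. h j) = (\<Sum>j\<in>{1..m} \<union> img. h j)"
          using sub A2[OF uU] by (intro sum.mono_neutral_right) (auto simp: h_def)
        also have "\<dots> = (\<Sum>j\<in>{1..m}. h j) + (\<Sum>j\<in>img. h j)"
          using dis finU unfolding img_def by (intro sum.union_disjoint) auto
        also have "(\<Sum>j\<in>{1..m}. h j) = (p - 1) * T i"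
          unfolding T_def h_def sum_distrib_left using A1[OF uU] by (intro sum.cong) auto
        also have "(\<Sum>j\<in>img. h j) = (\<Sum>v\<in>U. \<nu>' u v * B v i)"
          unfolding img_def using injimg by (simp add: sum.reindex h_def \<nu>'_def B_def)
        finally have e2: "(p - 1) * T i + (\<Sum>v\<in>U. \<nu>' u v * B v i) + \<sigma> u i = p * u i" using e by simp
        have su: "\<sigma> u i = B (\<sigma> u) i + T i" using uB permutes_in_image[OF perm] uU by auto
        have "p * u i = p * B u i + p * T i" using uB[OF uU] by (simp add: algebra_simps)
        thus ?thesis using e2 su pm[of "T i"] by linarith
      qed
      have rowsum: "\<forall>u\<in>U. (\<Sum>v\<in>U. \<nu>' u v) + 1 = p"
        using rowvec[of _ "n + 1"] by (simp add: B_def)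
      have rowb: "\<forall>u\<in>U. (\<Sum>v\<in>U. \<nu>' u v * \<beta> v) + \<beta> (\<sigma> u) = p * \<beta> u"
      proof
        fix u assume uU: "u \<in> U"
        have "(\<Sum>v\<in>U. \<nu>' u v * \<beta> v) = (\<Sum>v\<in>U. \<Sum>i<n+2. \<nu>' u v * B v i * D ^ i)"
          unfolding \<beta>_def ell_def by (simp del: sum.lessThan_Suc add: sum_distrib_left mult.assoc)
        also have "\<dots> = (\<Sum>i<n+2. \<Sum>v\<in>U. \<nu>' u v * B v i * D ^ i)" by (rule sum.swap)
        also have "\<dots> = (\<Sum>i<n+2. (\<Sum>v\<in>U. \<nu>' u v * B v i) * D ^ i)"
          by (simp del: sum.lessThan_Suc add: sum_distrib_right)
        finally have "(\<Sum>v\<in>U. \<nu>' u v * \<beta> v) + \<beta> (\<sigma> u) =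
            (\<Sum>i<n+2. ((\<Sum>v\<in>U. \<nu>' u v * B v i) + B (\<sigma> u) i) * D ^ i)"
          unfolding \<beta>_def ell_def by (simp del: sum.lessThan_Suc add: sum.distrib algebra_simps)
        also have "\<dots> = (\<Sum>i<n+2. p * (B u i * D ^ i))"
          using rowvec[OF uU] by (simp del: sum.lessThan_Suc add: mult.assoc)
        also have "\<dots> = p * \<beta> u" unfolding \<beta>_def ell_def by (simp del: sum.lessThan_Suc add: sum_distrib_left)
        finally show "(\<Sum>v\<in>U. \<nu>' u v * \<beta> v) + \<beta> (\<sigma> u) = p * \<beta> u" .
      qed
      have P: "\<forall>u\<in>U. \<sigma> u = u \<and> (\<forall>v\<in>U. \<nu>' u v = (if v = u then p - 1 else 0))"
        by (rule peel[OF finU perm binj rowb rowsum colsum])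
      have sid: "\<sigma> = id"
      proof
        fix x show "\<sigma> x = id x"
          using P permutes_not_in[OF perm, of x] by (cases "x \<in> U") auto
      qed
      have "f = \<nu>r"
      proof
        fix x show "f x = \<nu>r x"
        proof (cases "x \<in> U")
          case False
          have "f x = undefined" by (rule PiE_arb[OF \<open>f \<in> _\<close> False])
          moreover have "\<nu>r x = undefined" unfolding \<nu>r_def using False by simp
          ultimately show ?thesis by simp
        next
          case xU: True
          show ?thesis unfolding \<nu>r_def restrict_apply' [OF xU]
          proof (rule poly_mapping_eqI)
            fix j
            show "Poly_Mapping.lookup (f x) j = Poly_Mapping.lookup (\<nu>s x) j"
            proof (cases "j \<in> {1..m}")
              case True thus ?thesis using A1[OF xU] by (simp add: lk\<nu>s J_def)
            next
              case nm: False
              show ?thesis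
              proof (cases "j \<in> img")
                case True
                then obtain v where vU: "v \<in> U" and j: "j = m + kk v" unfolding img_def by auto
                have "\<forall>v\<in>U. \<nu>' x v = (if v = x then p - 1 else 0)" using P xU by blast
                hence "\<nu>' x v = (if v = x then p - 1 else 0)" using vU by blast
                hence "Poly_Mapping.lookup (f x) j = (if v = x then p - 1 else 0)"
                  unfolding j \<nu>'_def .
                thus ?thesis using nm kk_eq[OF vU xU] unfolding j by (auto simp: lk\<nu>s J_def)
              next
                case False
                hence "j \<noteq> m + kk x" using xU unfolding img_def by auto
                thus ?thesis using A2[OF xU nm False] nm by (auto simp add: lk\<nu>s J_def)
              qed
            qed
          qed
        qed
      qed
      with sid show ?thesis by simp
    qed
    have "Poly_Mapping.lookup (det_on U ?M) m0 = (\<Prod>u\<in>U. c (\<nu>s u))"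
    proof -
      define g where "g \<sigma> f = (if (\<Sum>u\<in>U. f u) = m0 then of_int (sign \<sigma>) * (\<Prod>u\<in>U. c (f u)) else 0)"
        for \<sigma> :: "(nat \<Rightarrow> nat) \<Rightarrow> (nat \<Rightarrow> nat)" and f :: "(nat \<Rightarrow> nat) \<Rightarrow> (nat \<Rightarrow>\<^sub>0 nat)"
      have \<nu>rP: "\<nu>r \<in> PiE U (\<lambda>u. S u (id u))" unfolding \<nu>r_def using \<nu>sS by auto
      have g0: "g \<sigma> f = 0" if "\<sigma> permutes U" "f \<in> PiE U (\<lambda>u. S u (\<sigma> u))" "\<not> (\<sigma> = id \<and> f = \<nu>r)" for \<sigma> f
      proof (rule ccontr)
        assume nz: "g \<sigma> f \<noteq> 0"
        hence "(\<Sum>u\<in>U. f u) = m0" "(\<Prod>u\<in>U. c (f u)) \<noteq> 0" unfolding g_def by (auto split: if_splits)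
        hence "\<forall>u\<in>U. c (f u) \<noteq> 0" using finU by auto
        thus False using key[OF that(1,2)] \<open>(\<Sum>u\<in>U. f u) = m0\<close> that(3) by blast
      qed
      have "Poly_Mapping.lookup (det_on U ?M) m0 = (\<Sum>\<sigma>\<in>{\<sigma>. \<sigma> permutes U}. \<Sum>f\<in>PiE U (\<lambda>u. S u (\<sigma> u)). g \<sigma> f)"
        unfolding DL g_def ..
      also have "\<dots> = (\<Sum>f\<in>PiE U (\<lambda>u. S u (id u)). g id f)"
        by (rule sum_single_nz) (use finU g0 permutes_id in \<open>auto intro!: sum.neutral simp: finite_permutations\<close>)
      also have "\<dots> = g id \<nu>r"
        by (rule sum_single_nz) (use finU finS \<nu>rP g0 permutes_id in \<open>auto intro!: finite_PiE\<close>)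
      also have "\<dots> = (\<Prod>u\<in>U. c (\<nu>s u))"
        unfolding g_def m0_def \<nu>r_def by (auto intro!: sum.cong prod.cong)
      finally show ?thesis .
    qed
    moreover have "(\<Prod>u\<in>U. c (\<nu>s u)) \<noteq> 0" using finU \<nu>snz by auto
    ultimately have "det_on U ?M \<noteq> 0" by auto
    thus ?thesis unfolding U_def .
  qed
qed

end
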